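(* Let $n$ be odd, let $A=S(n)$, and let $p'$ be a prime divisor of $n$ with $v_{p'}(n)\geq 2$. Let $n'=n/p'$ and let $f:U(n)\to U(n')$ be the natural map. Then $L(n';p')\subseteq f(A)$.
   Context: $U(m)$ is the unit group of $\mathbb{Z}_m$; $v_p(n)=r$ means $p^r\mid n$ and $p^{r+1}\nmid n$. For odd $m=\prod p_i^{r_i}$, prime $p\mid m$ and $a\in U(m)$, $\left(\frac{a}{p}\right)$ is the Legendre symbol of the image of $a$ mod $p$, $\left(\frac{a}{m}\right)=\prod\left(\frac{a}{p_i}\right)^{r_i}$, $S(m)$ is the kernel of $a\mapsto\left(\frac{a}{m}\right)$ on $U(m)$, and $L(m;p')=\{a\in U(m):\left(\frac{a}{m}\right)=\left(\frac{a}{p'}\right)\}$ for a prime $p'\mid m$. The natural map $U(n)\to U(n')$ is induced by $a+n\mathbb{Z}\mapsto a+n'\mathbb{Z}$. *)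

theory Defs
  imports "HOL-Number_Theory.Number_Theory"
begin

text \<open>Unit group of Z_m, represented by the residues 0 <= a < m coprime to m.\<close>
definition U :: "nat \<Rightarrow> nat set" where
  "U m = {a. a < m \<and> coprime a m}"

definition jsym :: "nat \<Rightarrow> nat \<Rightarrow> int" where
  "jsym a m = (\<Prod>p\<in>prime_factors m. Legendre (int a) (int p) ^ multiplicity p m)"

definition S :: "nat \<Rightarrow> nat set" where
  "S m = {a \<in> U m. jsym a m = 1}"

definition L :: "nat \<Rightarrow> nat \<Rightarrow> nat set" where
  "L m p' = {a \<in> U m. jsym a m = Legendre (int a) (int p')}"

text \<open>Natural map U(n) -> U(n'), a + nZ |-> a + n'Z.\<close>
definition natmap :: "nat \<Rightarrow> nat \<Rightarrow> nat" where
  "natmap n' a = a mod n'"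

end

theory Submission
  imports Defs
begin

theorem lemma4p1:
  fixes n p' :: nat
  assumes "odd n"
    and "prime p'" and "p' dvd n"
    and "multiplicity p' n \<ge> 2"
  shows "L (n div p') p' \<subseteq> natmap (n div p') ` S n"
proof
  fix b assume b: "b \<in> L (n div p') p'"
  define m where "m = n div p'"
  have n0: "n \<noteq> 0" using assms(1) by (metis even_zero)
  have nm: "n = p' * m" using assms(3) m_def by auto
  have m0: "m \<noteq> 0" using nm n0 by auto
  have p0: "p' \<noteq> 0" using assms(2) by auto
  have mult: "multiplicity p' n = Suc (multiplicity p' m)"
    using nm prime_elem_multiplicity_mult_distrib[of p' p' m] assms(2) m0 p0
    by (simp add: multiplicity_self)
  have pm: "p' dvd m"
    using mult assms(4) m0 multiplicity_eq_zero_iff[of m p'] assms(2) by auto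
  have PF: "prime_factors n = prime_factors m"
    using nm prime_factors_product[of p' m] p0 m0 assms(2) pm
    by (auto simp: prime_factors_dvd prime_prime_factors)
  have multq: "multiplicity q n = multiplicity q m" if "q \<in> prime_factors m" "q \<noteq> p'" for q
  proof -
    have "prime q" using that by auto
    then have "multiplicity q n = multiplicity q p' + multiplicity q m"
      using nm prime_elem_multiplicity_mult_distrib[of q p' m] p0 m0 by simp
    moreover have "multiplicity q p' = 0"
      using multiplicity_distinct_prime_power[of q p' 1] \<open>prime q\<close> assms(2) that(2) by simp
    ultimately show ?thesis by simp
  qed
  have bU: "b < m" "coprime b m" and bL: "jsym b m = Legendre (int b) (int p')"
    using b by (auto simp: L_def U_def m_def)
  have pin: "p' \<in> prime_factors m" using pm m0 assms(2) by (auto simp: prime_factors_dvd)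
  have fin: "finite (prime_factors m)" by simp
  have "jsym b n = (\<Prod>q\<in>prime_factors m. Legendre (int b) (int q) ^ multiplicity q n)"
    unfolding jsym_def PF ..
  also have "\<dots> = Legendre (int b) (int p') ^ multiplicity p' n *
      (\<Prod>q\<in>prime_factors m - {p'}. Legendre (int b) (int q) ^ multiplicity q n)"
    using prod.remove[OF fin pin] by simp
  also have "(\<Prod>q\<in>prime_factors m - {p'}. Legendre (int b) (int q) ^ multiplicity q n)
     = (\<Prod>q\<in>prime_factors m - {p'}. Legendre (int b) (int q) ^ multiplicity q m)"
    using multq by (intro prod.cong) auto
  also have "Legendre (int b) (int p') ^ multiplicity p' n *
      (\<Prod>q\<in>prime_factors m - {p'}. Legendre (int b) (int q) ^ multiplicity q m)
     = Legendre (int b) (int p') * jsym b m"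
    unfolding jsym_def mult
    using prod.remove[OF fin pin, of "\<lambda>q. Legendre (int b) (int q) ^ multiplicity q m"]
    by (simp add: mult.assoc)
  also have "\<dots> = Legendre (int b) (int p') ^ 2" using bL by (simp add: power2_eq_square)
  also have "\<dots> = 1"
  proof -
    have "\<not> p' dvd b" using bU pm assms(2)
      by (metis coprime_common_divisor not_prime_unit)
    then have "\<not> [int b = 0] (mod int p')"
      by (simp add: cong_0_iff)
    then show ?thesis unfolding Legendre_def by auto
  qed
  finally have j: "jsym b n = 1" .
  have "coprime b n" using bU nm pm
    by (metis coprime_commute coprime_mult_right_iff coprime_dvd_mult_right_iff dvd_mult_div_cancel)
  moreover have "b < n"
  proof -
    have "m \<le> p' * m" using p0 by simp
    then show ?thesis using bU nm by linarith
  qed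
  ultimately have "b \<in> S n" using j by (simp add: S_def U_def)
  moreover have "natmap m b = b" using bU by (simp add: natmap_def)
  ultimately show "b \<in> natmap (n div p') ` S n" unfolding m_def[symmetric] by force
qed

end
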